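(* Let two stochastic CA have the same set of states and explicit global functions $F_A$ and $F_B$. If $S_{F_A}=S_{F_B}$ then $N_{F_A}=N_{F_B}$.
   Context: A stochastic CA is $(Q,R,V,V',f)$ with $Q$ finite states, $R$ finite random symbols, $V=\{v_1,\dots,v_r\}$, $V'=\{v'_1,\dots,v'_{r'}\}$ finite subsets of $\mathbb{Z}$, $f:Q^r\times R^{r'}\to Q$; explicit global function $F(c,s)_z=f((c_{z+v_1},\dots,c_{z+v_r}),(s_{z+v'_1},\dots,s_{z+v'_{r'}}))$. The non-deterministic global function is $N_F(c)=\{F(c,s):s\in R^{\mathbb{Z}}\}$. The stochastic global function is $S_F(c)([u]_z)=\nu_R\{s:F(c,s)\in[u]_z\}$, where $\nu_R$ is the uniform Bernoulli measure on $R^{\mathbb{Z}}$ and $[u]_z=\{c:c_{z+x}=u_x,0\le x<|u|\}$. *)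

theory Defs
  imports "HOL-Probability.Probability"
begin

text \<open>A stochastic CA (Q,R,V,V',f): states are a finite type 'q, random symbols a finite
(hence nonempty) type 'r, the neighbourhoods V = [v_1,...,v_r] and V' = [v'_1,...,v'_r']
are lists of distinct integers, and the local rule f takes the list of r neighbouring
states and the list of r' neighbouring random symbols.\<close>

definition stoch_CA :: "int list \<Rightarrow> int list \<Rightarrow> ('q::finite list \<Rightarrow> 'r::finite list \<Rightarrow> 'q) \<Rightarrow> bool" where
  "stoch_CA V V' f \<longleftrightarrow> distinct V \<and> distinct V'"

definition explicit_global ::
  "int list \<Rightarrow> int list \<Rightarrow> ('q list \<Rightarrow> 'r list \<Rightarrow> 'q) \<Rightarrow> (int \<Rightarrow> 'q) \<Rightarrow> (int \<Rightarrow> 'r) \<Rightarrow> (int \<Rightarrow> 'q)" where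
  "explicit_global V V' f c s = (\<lambda>z. f (map (\<lambda>v. c (z + v)) V) (map (\<lambda>v. s (z + v)) V'))"

definition nondet_global ::
  "int list \<Rightarrow> int list \<Rightarrow> ('q list \<Rightarrow> 'r list \<Rightarrow> 'q) \<Rightarrow> (int \<Rightarrow> 'q) \<Rightarrow> (int \<Rightarrow> 'q) set" where
  "nondet_global V V' f c = {explicit_global V V' f c s | s. True}"

definition bernoulli_unif :: "(int \<Rightarrow> 'r::finite) measure" where
  "bernoulli_unif = (\<Pi>\<^sub>M z\<in>(UNIV::int set). measure_pmf (pmf_of_set (UNIV::'r set)))"

definition cylinder :: "'q list \<Rightarrow> int \<Rightarrow> (int \<Rightarrow> 'q) set" where
  "cylinder u z = {c. \<forall>x < length u. c (z + int x) = u ! x}"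

definition stoch_global ::
  "int list \<Rightarrow> int list \<Rightarrow> ('q list \<Rightarrow> 'r::finite list \<Rightarrow> 'q) \<Rightarrow> (int \<Rightarrow> 'q) \<Rightarrow> 'q list \<Rightarrow> int \<Rightarrow> real" where
  "stoch_global V V' f c u z =
     measure bernoulli_unif {s \<in> space bernoulli_unif. explicit_global V V' f c s \<in> cylinder u z}"

end

theory Submission imports Defs begin

definition cylW :: "int set \<Rightarrow> (int \<Rightarrow> 'r) \<Rightarrow> (int \<Rightarrow> 'r) set" where
  "cylW W g = {t. \<forall>j\<in>W. t j = g j}"

lemma space_bu: "space (bernoulli_unif :: (int \<Rightarrow> 'r::finite) measure) = UNIV"
  by (simp add: bernoulli_unif_def space_PiM)

lemma prob_bu: "prob_space (bernoulli_unif :: (int \<Rightarrow> 'r::finite) measure)"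
  unfolding bernoulli_unif_def by (rule prob_space_PiM) (simp add: prob_space_measure_pmf)

lemma cylW_eq: "(cylW W g :: (int \<Rightarrow> 'r::finite) set) =
   prod_emb UNIV (\<lambda>_. measure_pmf (pmf_of_set (UNIV::'r set))) W (PiE W (\<lambda>j. {g j}))"
  by (auto simp: cylW_def prod_emb_def PiE_iff)

lemma cylW_sets: "finite W \<Longrightarrow> (cylW W g :: (int \<Rightarrow> 'r::finite) set) \<in> sets bernoulli_unif"
  unfolding cylW_eq bernoulli_unif_def by (rule sets_PiM_I) auto

lemma cylW_pos: "finite W \<Longrightarrow> measure bernoulli_unif (cylW W (g :: int \<Rightarrow> 'r::finite)) > 0"
proof -
  assume W: "finite W"
  have "emeasure bernoulli_unif (cylW W g) = (\<Prod>i\<in>W. emeasure (measure_pmf (pmf_of_set (UNIV::'r set))) {g i})"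
    unfolding cylW_eq bernoulli_unif_def
    by (rule emeasure_PiM_emb) (auto simp: W prob_space_measure_pmf)
  also have "\<dots> = (\<Prod>i\<in>W. ennreal (1 / real CARD('r)))"
    by (simp add: emeasure_pmf_single)
  finally have "measure bernoulli_unif (cylW W g) = (\<Prod>i\<in>W. 1 / real CARD('r))"
    by (simp add: measure_def ennreal_power)
  then show ?thesis by simp
qed

definition dep :: "int set \<Rightarrow> (int \<Rightarrow> 'r) set \<Rightarrow> bool" where
  "dep W S \<longleftrightarrow> (\<forall>s t. (\<forall>j\<in>W. s j = t j) \<longrightarrow> (s \<in> S \<longleftrightarrow> t \<in> S))"

lemma dep_sets:
  assumes W: "finite W" and d: "dep W S"
  shows "(S :: (int \<Rightarrow> 'r::finite) set) \<in> sets bernoulli_unif"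
proof -
  have "S = (\<Union>g\<in>(\<lambda>s. restrict s W) ` S. cylW W g)"
    using d by (auto simp: dep_def cylW_def)
  moreover have "finite ((\<lambda>s. restrict s W) ` S)"
    by (rule finite_subset[of _ "PiE W (\<lambda>_. UNIV)"]) (auto intro!: finite_PiE W)
  ultimately show ?thesis
    by (metis (no_types, lifting) W cylW_sets sets.finite_UN)
qed

definition XT :: "(int \<Rightarrow> 'r) topology" where
  "XT = product_topology (\<lambda>_. discrete_topology UNIV) UNIV"

lemma XT_top: "topspace XT = UNIV"
  by (simp add: XT_def)

lemma XT_compact: "compact_space (XT :: (int \<Rightarrow> 'r::finite) topology)"
  unfolding XT_def by (simp add: compact_space_product_topology compact_space_discrete_topology)

lemma cylW_open: "finite W \<Longrightarrow> openin XT (cylW W g)"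
proof -
  assume W: "finite W"
  have "cylW W g = PiE UNIV (\<lambda>j. if j \<in> W then {g j} else UNIV)"
    by (auto simp: cylW_def PiE_iff) (metis singletonD)
  moreover have "openin XT (PiE UNIV (\<lambda>j. if j \<in> W then {g j} else UNIV))"
    unfolding XT_def openin_PiE_gen
    by (rule disjI2) (auto intro: finite_subset[OF _ W])
  ultimately show ?thesis by simp
qed

lemma dep_open:
  assumes W: "finite W" and d: "dep W S"
  shows "openin XT S"
proof -
  have "S = (\<Union>g\<in>S. cylW W g)"
    using d by (auto simp: dep_def cylW_def)
  then show ?thesis using cylW_open[OF W] by (metis openin_Union imageE)
qed

lemma dep_closed:
  assumes W: "finite W" and d: "dep W S"
  shows "closedin XT S"
proof -
  have "dep W (- S)" using d by (auto simp: dep_def)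
  then have "openin XT (- S)" using dep_open W by blast
  then show ?thesis by (simp add: closedin_def XT_top Compl_eq_Diff_UNIV)
qed

definition Wc :: "int list \<Rightarrow> nat \<Rightarrow> int \<Rightarrow> int set" where
  "Wc V' n z = (\<lambda>(x, v). z + int x + v) ` ({..<n} \<times> set V')"

lemma Wc_finite: "finite (Wc V' n z)"
  by (simp add: Wc_def)

lemma dep_cyl: "dep (Wc V' (length u) z) {s. explicit_global V V' f c s \<in> cylinder u z}"
proof -
  have "explicit_global V V' f c s \<in> cylinder u z \<longleftrightarrow> explicit_global V V' f c t \<in> cylinder u z"
    if a: "\<forall>j\<in>Wc V' (length u) z. s j = t j" for s t
  proof -
    have eqm: "\<And>x. x < length u \<Longrightarrow> map (\<lambda>v. s (z + int x + v)) V' = map (\<lambda>v. t (z + int x + v)) V'"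
      using a by (auto simp: Wc_def)
    show ?thesis unfolding cylinder_def explicit_global_def by (simp add: eqm)
  qed
  then show ?thesis by (auto simp: dep_def)
qed

lemma cyl_char:
  "cylinder (map (\<lambda>x. y (- int n + int x)) [0..<2*n]) (- int n) = {c. \<forall>j. - int n \<le> j \<and> j < int n \<longrightarrow> c j = y j}"
proof safe
  fix c j assume c: "c \<in> cylinder (map (\<lambda>x. y (- int n + int x)) [0..<2*n]) (- int n)"
    and j: "- int n \<le> j" "j < int n"
  define x where "x = nat (j + int n)"
  have x: "x < 2*n" "- int n + int x = j" using j by (auto simp: x_def)
  then show "c j = y j" using c by (auto simp: cylinder_def)
next
  fix c assume "\<forall>j. - int n \<le> j \<and> j < int n \<longrightarrow> c j = y j"
  then show "c \<in> cylinder (map (\<lambda>x. y (- int n + int x)) [0..<2*n]) (- int n)"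
    by (auto simp: cylinder_def)
qed

lemma incl:
  fixes VA VA' :: "int list" and fA :: "'q::finite list \<Rightarrow> 'a::finite list \<Rightarrow> 'q"
    and VB VB' :: "int list" and fB :: "'q list \<Rightarrow> 'b::finite list \<Rightarrow> 'q"
  assumes eq: "stoch_global VA VA' fA = stoch_global VB VB' fB"
  shows "nondet_global VA VA' fA c \<subseteq> nondet_global VB VB' fB c"
proof
  fix y assume "y \<in> nondet_global VA VA' fA c"
  then obtain s0 where y: "y = explicit_global VA VA' fA c s0" by (auto simp: nondet_global_def)
  define u where "u n = map (\<lambda>x. y (- int n + int x)) [0..<2*n]" for n
  define K where "K n = {s. explicit_global VB VB' fB c s \<in> cylinder (u n) (- int n)}" for n
  have Kne: "K n \<noteq> {}" for n
  proof -
    let ?SA = "{s. explicit_global VA VA' fA c s \<in> cylinder (u n) (- int n)}"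
    let ?W = "Wc VA' (length (u n)) (- int n)"
    have dA: "dep ?W ?SA" by (rule dep_cyl)
    have s0: "s0 \<in> ?SA" unfolding u_def cyl_char y by simp
    have sub: "cylW ?W s0 \<subseteq> ?SA"
      using dA s0 by (auto simp: dep_def cylW_def)
    interpret prob_space "bernoulli_unif :: (int \<Rightarrow> 'a) measure" by (rule prob_bu)
    have "0 < measure bernoulli_unif (cylW ?W s0)" by (rule cylW_pos[OF Wc_finite])
    also have "\<dots> \<le> measure bernoulli_unif ?SA"
      by (rule finite_measure_mono[OF sub dep_sets[OF Wc_finite dA]])
    also have "\<dots> = stoch_global VA VA' fA c (u n) (- int n)"
      by (simp add: stoch_global_def space_bu)
    also have "\<dots> = stoch_global VB VB' fB c (u n) (- int n)" by (simp add: eq)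
    also have "\<dots> = measure bernoulli_unif (K n)"
      by (simp add: stoch_global_def space_bu K_def)
    finally show ?thesis by auto
  qed
  have Kchar: "K n = {s. \<forall>j. - int n \<le> j \<and> j < int n \<longrightarrow> explicit_global VB VB' fB c s j = y j}" for n
    unfolding K_def u_def cyl_char by simp
  have Kmono: "m \<le> n \<Longrightarrow> K n \<subseteq> K m" for m n
    unfolding Kchar by auto
  have Kclosed: "closedin XT (K n)" for n
    unfolding K_def by (rule dep_closed[OF Wc_finite dep_cyl])
  have hyp: "\<forall>C\<in>range K. closedin XT C \<and> (\<forall>F. finite F \<and> F \<subseteq> range K \<longrightarrow> \<Inter> F \<noteq> {})"
    proof (intro ballI conjI allI impI)
      fix C assume "C \<in> range K" then show "closedin XT C" using Kclosed by auto
    next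
      fix F assume F: "finite F \<and> F \<subseteq> range K"
      then obtain N where N: "finite N" "F = K ` N" by (meson finite_subset_image)
      define m where "m = Max (insert 0 N)"
      have "K m \<subseteq> K n" if "n \<in> N" for n
        using Kmono Max_ge[of "insert 0 N" n] N(1) that by (simp add: m_def)
      then have "K m \<subseteq> \<Inter> F" using N by auto
      then show "\<Inter> F \<noteq> {}" using Kne by blast
    qed
  have "\<Inter>(range K) \<noteq> {}"
    using XT_compact[unfolded compact_space_fip, rule_format, of "range K"] hyp by blast
  then obtain s where s: "\<And>n. s \<in> K n" by blast
  have "explicit_global VB VB' fB c s = y"
  proof
    fix j
    show "explicit_global VB VB' fB c s j = y j"
      using s[of "nat \<bar>j\<bar> + 1"] unfolding Kchar by (auto dest: spec[of _ j])
  qed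
  then show "y \<in> nondet_global VB VB' fB c" by (auto simp: nondet_global_def)
qed

theorem fact2:
  fixes VA VA' :: "int list" and fA :: "'q::finite list \<Rightarrow> 'a::finite list \<Rightarrow> 'q"
    and VB VB' :: "int list" and fB :: "'q list \<Rightarrow> 'b::finite list \<Rightarrow> 'q"
  assumes "stoch_CA VA VA' fA" and "stoch_CA VB VB' fB"
    and "stoch_global VA VA' fA = stoch_global VB VB' fB"
  shows "nondet_global VA VA' fA = nondet_global VB VB' fB"
proof
  fix c
  show "nondet_global VA VA' fA c = nondet_global VB VB' fB c"
    using incl[OF assms(3)] incl[OF assms(3)[symmetric]] by blast
qed

end
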